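(* Consider a check node decoder (CND) whose EXIT function on the BEC is $$I_{E,C}(p)=\sum_{j\ge2}\rho^{(\mathrm{SPC})}_j(1-p)^{j-1}+\sum_{i}\rho_i\,I^{(i)}_{E,C}(p),$$ where the nonnegative edge fractions $\rho^{(\mathrm{SPC})}_j$ and $\rho_i$ sum to $1$, and for each $i$, $I^{(i)}_{E,C}$ is the check-node EXIT function of an $(n_i,k_i)$ binary linear code $\mathcal{C}_i$ with $n_i\ge2$, $k_i\ge1$ and $d_{\min}(\mathcal{C}_i)\ge2$. Then $$\frac{\mathrm{d}I_{E,C}(p)}{\mathrm{d}p}\Big|_{p=0}=-\rho'_{\mathrm{SPC}}(1)-\sum_{i:\,d_{\min}(\mathcal{C}_i)=2}\frac{2\rho_i}{n_i}\,\Delta^{(i)}_{n_i-2},$$ i.e. only the component codes $\mathcal{C}_i$ with minimum distance exactly $2$ (together with the SPC terms) contribute.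
   Context: $\rho_{\mathrm{SPC}}(x)=\sum_{j\ge2}\rho^{(\mathrm{SPC})}_jx^{j-1}$, so $\rho'_{\mathrm{SPC}}(1)=\sum_{j\ge2}(j-1)\rho^{(\mathrm{SPC})}_j$. For an $(n,k)$ code with $k\times n$ generator matrix $\mathbf{G}$ of rank $k$: $\tilde e_g=\sum_{|S|=g}\operatorname{rank}(\mathbf{G}_S)$ (sum over $g$-element sets $S$ of columns), $a_t=(n-t)\tilde e_{n-t}-(t+1)\tilde e_{n-t-1}$, and its check-node EXIT function is $I_E(p)=1-\frac1n\sum_{t=0}^{n-1}a_tp^t(1-p)^{n-t-1}$. $\Delta^{(i)}_{n_i-2}=\sum_{|S|=n_i-2}\big(k_i-\operatorname{rank}(\mathbf{G}^{(i)}_S)\big)$, the sum over all $(n_i-2)$-element column sets of a generator matrix $\mathbf{G}^{(i)}$ of $\mathcal{C}_i$ (this value does not depend on the choice of generator matrix). *)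

theory Defs
  imports "HOL-Library.Z2" "Jordan_Normal_Form.DL_Rank" "Jordan_Normal_Form.DL_Submatrix"
begin

text \<open>Binary linear codes are given by a generator matrix G over GF(2) (type bit),
  of dimension k x n (k = dim_row G, n = dim_col G).\<close>

definition gen_rank :: "bit mat \<Rightarrow> nat" where
  "gen_rank G = vec_space.rank (dim_row G) G"

definition col_rank :: "bit mat \<Rightarrow> nat set \<Rightarrow> nat" where
  "col_rank G S = vec_space.rank (dim_row G) (submatrix G {..<dim_row G} S)"

definition codewords :: "bit mat \<Rightarrow> bit vec set" where
  "codewords G = {mult_mat_vec (transpose_mat G) u | u. u \<in> carrier_vec (dim_row G)}"

definition hweight :: "bit vec \<Rightarrow> nat" where
  "hweight c = card {j. j < dim_vec c \<and> c $ j \<noteq> 0}"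

definition dmin :: "bit mat \<Rightarrow> nat" where
  "dmin G = Min (hweight ` (codewords G - {0\<^sub>v (dim_col G)}))"

definition e_tilde :: "bit mat \<Rightarrow> nat \<Rightarrow> nat" where
  "e_tilde G g = (\<Sum>S\<in>{S. S \<subseteq> {..<dim_col G} \<and> card S = g}. col_rank G S)"

definition a_coef :: "bit mat \<Rightarrow> nat \<Rightarrow> real" where
  "a_coef G t = real (dim_col G - t) * real (e_tilde G (dim_col G - t))
               - real (t + 1) * real (e_tilde G (dim_col G - t - 1))"

definition exit_cnd :: "bit mat \<Rightarrow> real \<Rightarrow> real" where
  "exit_cnd G p = 1 - (1 / real (dim_col G)) *
     (\<Sum>t = 0..<dim_col G. a_coef G t * p ^ t * (1 - p) ^ (dim_col G - t - 1))"

definition Delta :: "bit mat \<Rightarrow> nat" where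
  "Delta G = (\<Sum>S\<in>{S. S \<subseteq> {..<dim_col G} \<and> card S = dim_col G - 2}.
                 dim_row G - col_rank G S)"

end

theory Submission
  imports Defs
begin


context vec_space begin

lemma rank_maxset:
  assumes "A \<in> carrier_mat n m"
  obtains S where "maximal S (\<lambda>T. T \<subseteq> set (cols A) \<and> lin_indpt T)" "rank A = card S"
    "S \<subseteq> set (cols A)" "lin_indpt S" "finite S"
proof -
  obtain S where S: "maximal S (\<lambda>T. T \<subseteq> set (cols A) \<and> lin_indpt T)"
    using maximal_exists[of "(\<lambda>T. T \<subseteq> set (cols A) \<and> lin_indpt T)" "card (set (cols A))" "{}"]
    by (meson List.finite_set card_mono empty_iff empty_subsetI finite_lin_indpt2 rev_finite_subset)
  have "S \<subseteq> set (cols A)" "lin_indpt S" using S by (auto simp: maximal_def)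
  then show ?thesis using that[OF S rank_card_indpt[OF assms S]] finite_subset by blast
qed

lemma rank_le_nr:
  assumes "A \<in> carrier_mat n m"
  shows "rank A \<le> n"
proof -
  obtain S where "rank A = card S" "S \<subseteq> set (cols A)" "lin_indpt S" by (rule rank_maxset[OF assms])
  moreover have "set (cols A) \<subseteq> carrier_vec n" using assms cols_dim by blast
  ultimately show ?thesis using li_le_dim(2)[of S] dim_is_n by auto
qed

lemma full_rank_orth:
  assumes A: "A \<in> carrier_mat n m" and r: "rank A = n" and u: "u \<in> carrier_vec n"
    and o: "\<And>j. j < m \<Longrightarrow> u \<bullet> col A j = 0"
  shows "u = 0\<^sub>v n"
proof -
  obtain S where S: "rank A = card S" "S \<subseteq> set (cols A)" "lin_indpt S" "finite S"
    by (rule rank_maxset[OF A])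
  have cc: "set (cols A) \<subseteq> carrier_vec n" using A cols_dim by blast
  have "basis S" using dim_li_is_basis[of S] S cc r dim_is_n by auto
  hence sp: "span S = carrier_vec n" unfolding basis_def by auto
  have "u \<in> orthogonal_complement S" unfolding orthogonal_complement_def
  proof (safe)
    show "u \<in> carrier_vec n" by fact
    fix y assume "y \<in> S"
    then obtain j where "j < m" "y = col A j" using S(2) A
      by (metis carrier_matD(2) cols_length cols_nth in_set_conv_nth subsetD)
    then show "u \<bullet> y = 0" using o by auto
  qed
  hence "u \<in> orthogonal_complement (span S)" using S(2) cc by simp
  hence "\<And>i. i < n \<Longrightarrow> u \<bullet> unit_vec n i = 0" unfolding sp orthogonal_complement_def using unit_vec_carrier by blast
  hence "\<And>i. i < n \<Longrightarrow> u $ i = 0" using u by (metis scalar_prod_right_unit)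
  then show ?thesis using u by (intro eq_vecI) auto
qed

lemma low_rank_annih:
  assumes A: "A \<in> carrier_mat n m" and r: "rank A < n"
  shows "\<exists>u \<in> carrier_vec n. u \<noteq> 0\<^sub>v n \<and> (\<forall>j<m. u \<bullet> col A j = 0)"
proof -
  obtain S where Sm: "maximal S (\<lambda>T. T \<subseteq> set (cols A) \<and> lin_indpt T)" and
    S: "rank A = card S" "S \<subseteq> set (cols A)" "lin_indpt S" "finite S"
    by (rule rank_maxset[OF A])
  have cc: "set (cols A) \<subseteq> carrier_vec n" using A cols_dim by blast
  have Sc: "S \<subseteq> carrier_vec n" using S cc by auto
  have colspan: "set (cols A) \<subseteq> span S"
  proof
    fix s assume s: "s \<in> set (cols A)"
    show "s \<in> span S"
    proof (rule ccontr)
      assume ns: "s \<notin> span S"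
      then have "lin_indpt (S\<union>{s})" using lindep_span
        by (meson S(3) Sc cc s lin_dep_iff_in_span rev_subsetD span_mem subset_trans)
      have "s\<notin>S" using ns Sc span_mem by auto
      then have "(S\<union>{s}) \<subseteq> set (cols A) \<and> lin_indpt (S\<union>{s})"
        using S(2) \<open>lin_indpt (S \<union> {s})\<close> s by auto
      then have "\<not>maximal S (\<lambda>T. T \<subseteq> set (cols A) \<and> lin_indpt T)"
        unfolding maximal_def using \<open>s \<notin> S\<close> by auto
      then show False using Sm by metis
    qed
  qed
  obtain ts where ts: "set ts = S" "distinct ts" using S(4) finite_distinct_list by blast
  have lts: "length ts < n" using ts r S(1) distinct_card by fastforce
  have tsc: "\<And>j. j < length ts \<Longrightarrow> ts ! j \<in> carrier_vec n" using ts Sc nth_mem by blast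
  define B where "B = mat n n (\<lambda>(i,j). if j < length ts then (ts ! j) $ i else 0)"
  have B: "B \<in> carrier_mat n n" unfolding B_def by auto
  define v :: "'a vec" where "v = vec n (\<lambda>j. if j < length ts then 0 else 1)"
  have v: "v \<in> carrier_vec n" unfolding v_def by auto
  have "v $ (n - 1) = 1" using lts unfolding v_def by auto
  hence v0: "v \<noteq> 0\<^sub>v n" using lts by (metis diff_less index_zero_vec(1) less_nat_zero_code
      not_gr_zero zero_less_one zero_neq_one)
  have "B *\<^sub>v v = 0\<^sub>v n"
    by (intro eq_vecI) (auto simp: B_def v_def mult_mat_vec_def scalar_prod_def intro!: sum.neutral)
  hence "det B = 0" using det_0_iff_vec_prod_zero_field[OF B] v v0 by blast
  hence "det (transpose_mat B) = 0" using det_transpose[OF B] by simp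
  then obtain u where u: "u \<in> carrier_vec n" "u \<noteq> 0\<^sub>v n" "transpose_mat B *\<^sub>v u = 0\<^sub>v n"
    using det_0_iff_vec_prod_zero_field[of "transpose_mat B" n] B by auto
  have "\<And>j. j < length ts \<Longrightarrow> u \<bullet> ts ! j = 0"
  proof -
    fix j assume j: "j < length ts"
    have "(transpose_mat B *\<^sub>v u) $ j = 0" using u(3) j lts by simp
    moreover have "col B j = ts ! j" using j lts tsc[OF j]
      by (intro eq_vecI) (auto simp: B_def)
    ultimately have "ts ! j \<bullet> u = 0" using j lts B by simp
    thus "u \<bullet> ts ! j = 0" using comm_scalar_prod[OF u(1) tsc[OF j]] by simp
  qed
  hence "u \<in> orthogonal_complement S" using u(1) ts unfolding orthogonal_complement_def
    by (auto simp: in_set_conv_nth)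
  hence "u \<in> orthogonal_complement (span S)" using Sc by simp
  hence "\<forall>y \<in> set (cols A). u \<bullet> y = 0" using colspan unfolding orthogonal_complement_def by auto
  hence "\<forall>j<m. u \<bullet> col A j = 0" using A by (simp add: cols_def)
  then show ?thesis using u by blast
qed

end

lemma dmin_le:
  assumes "c \<in> codewords G - {0\<^sub>v (dim_col G)}"
  shows "dmin G \<le> hweight c"
proof -
  have dv: "\<And>c. c \<in> codewords G \<Longrightarrow> dim_vec c = dim_col G" unfolding codewords_def by auto
  have hw: "\<And>c. hweight c \<le> dim_vec c" unfolding hweight_def
    by (metis (no_types, lifting) card_lessThan card_mono finite_lessThan lessThan_iff mem_Collect_eq subsetI)
  have "hweight ` (codewords G - {0\<^sub>v (dim_col G)}) \<subseteq> {..dim_col G}"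
  proof
    fix x assume "x \<in> hweight ` (codewords G - {0\<^sub>v (dim_col G)})"
    then obtain c where "c \<in> codewords G" "x = hweight c" by blast
    then show "x \<in> {..dim_col G}" using dv[of c] hw[of c] by simp
  qed
  hence "finite (hweight ` (codewords G - {0\<^sub>v (dim_col G)}))" using finite_subset by blast
  then show ?thesis unfolding dmin_def using assms by (intro Min_le) auto
qed

lemma col_rank_le:
  assumes "G \<in> carrier_mat k n"
  shows "col_rank G S \<le> k"
proof -
  have "submatrix G {..<dim_row G} S \<in> carrier_mat k (dim_col (submatrix G {..<dim_row G} S))"
    using assms by (auto simp: dim_submatrix)
  from vec_space.rank_le_nr[OF this] show ?thesis unfolding col_rank_def using assms by simp
qed

lemma codeword_exists:
  fixes G :: "bit mat"
  assumes G: "G \<in> carrier_mat k n" and gr: "gen_rank G = k" and Sn: "S \<subseteq> {..<n}"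
    and lr: "col_rank G S < k"
  shows "\<exists>c \<in> codewords G - {0\<^sub>v (dim_col G)}. hweight c \<le> n - card S"
proof -
  define A where "A = submatrix G {..<k} S"
  have fS: "finite S" using Sn finite_subset by blast
  have rk: "card {i. i < dim_row G \<and> i \<in> {..<k}} = k" using G by simp
  have ck: "card {j. j < dim_col G \<and> j \<in> S} = card S" using G Sn
    by (metis (no_types, lifting) Collect_cong Collect_mem_eq carrier_matD(2) lessThan_iff subsetD)
  have A: "A \<in> carrier_mat k (card S)" unfolding A_def using rk ck by (auto simp: dim_submatrix)
  have "vec_space.rank k A < k" using lr G unfolding col_rank_def A_def by auto
  then obtain u where u: "u \<in> carrier_vec k" "u \<noteq> 0\<^sub>v k" "\<forall>j<card S. u \<bullet> col A j = 0"
    using vec_space.low_rank_annih[OF A] by blast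
  define c where "c = mult_mat_vec (transpose_mat G) u"
  have cw: "c \<in> codewords G" unfolding codewords_def c_def using u G by auto
  have cdim: "c \<in> carrier_vec n" unfolding c_def using G u(1) by auto
  have cj: "c $ j = col G j \<bullet> u" if "j < n" for j unfolding c_def using that G by simp
  have zS: "c $ j = 0" if j: "j \<in> S" for j
  proof -
    have jn: "j < n" using j Sn by auto
    define i where "i = card {a\<in>S. a < j}"
    have "{a\<in>S. a < j} \<subset> {j. j < dim_col G \<and> j \<in> S}" using j jn G by auto
    hence "card {a\<in>S. a < j} < card {j. j < dim_col G \<and> j \<in> S}"
      by (rule psubset_card_mono[rotated]) simp
    hence il: "i < card S" unfolding i_def using ck by simp
    have "col A i = col G j"
    proof (rule eq_vecI)
      fix r assume "r < dim_vec (col G j)"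
      hence r: "r < k" using G by simp
      have "{a\<in>{..<k}. a < r} = {..<r}" using r by auto
      hence cr: "card {a\<in>{..<k}. a < r} = r" by simp
      have "A $$ (r, i) = G $$ (r, j)" unfolding A_def i_def
        using submatrix_index_card[of r G j "{..<k}" S] r jn G j cr by auto
      then show "col A i $ r = col G j $ r" using r il A G jn by simp
    qed (use A G il in simp)
    moreover have "u \<bullet> col A i = 0" using u(3) il by blast
    ultimately have uG: "u \<bullet> col G j = 0" by simp
    have cG: "col G j \<in> carrier_vec k" using G by (intro carrier_vecI) simp
    have "col G j \<bullet> u = u \<bullet> col G j" by (rule comm_scalar_prod[OF cG u(1)])
    with uG have "col G j \<bullet> u = 0" by simp
    then show ?thesis using cj jn by simp
  qed
  have c0: "c \<noteq> 0\<^sub>v n"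
  proof
    assume "c = 0\<^sub>v n"
    have "u \<bullet> col G j = 0" if j: "j < n" for j
    proof -
      have "c $ j = 0" using \<open>c = 0\<^sub>v n\<close> j by simp
      hence "col G j \<bullet> u = 0" using cj[OF j] by simp
      moreover have cG: "col G j \<in> carrier_vec k" using G by (intro carrier_vecI) simp
      moreover have "col G j \<bullet> u = u \<bullet> col G j" by (rule comm_scalar_prod[OF cG u(1)])
      ultimately show ?thesis by simp
    qed
    moreover have "vec_space.rank k G = k" using gr G unfolding gen_rank_def by simp
    ultimately have "u = 0\<^sub>v k" using vec_space.full_rank_orth[OF G _ u(1)] by blast
    then show False using u(2) by simp
  qed
  have "{j. j < dim_vec c \<and> c $ j \<noteq> 0} \<subseteq> {..<n} - S" using cdim zS by auto
  hence "hweight c \<le> card ({..<n} - S)" unfolding hweight_def by (intro card_mono) auto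
  also have "\<dots> = n - card S" using Sn by (simp add: card_Diff_subset fS)
  finally show ?thesis using cw c0 G by (intro bexI[of _ c]) auto
qed

lemma col_rank_full:
  fixes G :: "bit mat"
  assumes G: "G \<in> carrier_mat k n" and gr: "gen_rank G = k" and Sn: "S \<subseteq> {..<n}"
    and big: "card S + dmin G > n"
  shows "col_rank G S = k"
proof (rule ccontr)
  assume "col_rank G S \<noteq> k"
  hence "col_rank G S < k" using col_rank_le[OF G] le_neq_implies_less by blast
  then obtain c where "c \<in> codewords G - {0\<^sub>v (dim_col G)}" "hweight c \<le> n - card S"
    using codeword_exists[OF G gr Sn] by blast
  hence "dmin G \<le> n - card S" using dmin_le by fastforce
  moreover have "card S \<le> n" using Sn by (metis card_lessThan card_mono finite_lessThan)
  ultimately show False using big by linarith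
qed



lemma term_deriv:
  fixes c :: real
  assumes "t < n" "n \<ge> 2"
  shows "((\<lambda>p. c * p ^ t * (1 - p) ^ (n - t - 1)) has_real_derivative
    ((if t = 0 then - real (n - 1) * c else 0) + (if t = 1 then c else 0))) (at 0)"
proof -
  have D: "((\<lambda>p. c * p ^ t * (1 - p) ^ (n - t - 1)) has_real_derivative
    (c * (real t * 0 ^ (t - 1)) * (1 - 0) ^ (n - t - 1) +
     (real (n - t - 1) * (1 - 0) ^ (n - t - 1 - 1) * (0 - 1)) * (c * 0 ^ t))) (at 0)"
    by (intro DERIV_mult DERIV_cmult; auto intro!: derivative_eq_intros)
  show ?thesis
  proof (cases "t = 0")
    case True then show ?thesis using D by simp
  next
    case False
    then show ?thesis using D by (cases "t = 1") (auto simp: zero_power)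
  qed
qed

lemma two_choose2: "2 * (n choose 2) = n * (n - 1)"
proof -
  have "even (n * (n - 1))" by (cases "even n") auto
  then show ?thesis by (simp add: choose_two)
qed

lemma exit_deriv:
  fixes G :: "bit mat"
  assumes G: "G \<in> carrier_mat k n" and gr: "gen_rank G = k" and n2: "n \<ge> 2"
    and d2: "dmin G \<ge> 2"
  shows "(exit_cnd G has_real_derivative (- (2 * real (Delta G) / real n))) (at 0)"
proof -
  have dc: "dim_col G = n" "dim_row G = k" using G by auto
  let ?F = "\<lambda>g. {S. S \<subseteq> {..<n} \<and> card S = g}"
  have cF: "card (?F g) = n choose g" for g using n_subsets[of "{..<n}" g] by simp
  have full: "col_rank G S = k" if "S \<in> ?F g" "g \<ge> n - 1" for S g
    using col_rank_full[OF G gr, of S] that d2 n2 by auto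
  have e0: "e_tilde G n = k"
  proof -
    have "e_tilde G n = (\<Sum>S\<in>?F n. k)" unfolding e_tilde_def dc
      by (rule sum.cong) (auto intro: full)
    then show ?thesis using cF[of n] by simp
  qed
  have e1: "e_tilde G (n - 1) = n * k"
  proof -
    have "e_tilde G (n - 1) = (\<Sum>S\<in>?F (n - 1). k)" unfolding e_tilde_def dc
      by (rule sum.cong) (auto intro: full)
    then show ?thesis using cF[of "n - 1"] n2 binomial_symmetric[of 1 n] by simp
  qed
  have e2: "e_tilde G (n - 2) + Delta G = (n choose 2) * k"
  proof -
    have le: "col_rank G S \<le> k" for S using col_rank_le[OF G] .
    have "e_tilde G (n - 2) + Delta G = (\<Sum>S\<in>?F (n - 2). col_rank G S + (k - col_rank G S))"
      unfolding e_tilde_def Delta_def dc by (simp add: sum.distrib)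
    also have "\<dots> = (\<Sum>S\<in>?F (n - 2). k)" using le by (intro sum.cong) auto
    also have "\<dots> = (n choose (n - 2)) * k" using cF[of "n - 2"] by simp
    also have "n choose (n - 2) = n choose 2" using n2 binomial_symmetric[of 2 n] by simp
    finally show ?thesis .
  qed
  have a0: "a_coef G 0 = 0" unfolding a_coef_def dc using e0 e1 by simp
  have a1: "a_coef G 1 = 2 * real (Delta G)"
  proof -
    have "real (e_tilde G (n - 2) + Delta G) = real ((n choose 2) * k)" using e2 by simp
    hence E: "real (Delta G) + real (e_tilde G (n - 2)) = real k * real (n choose 2)" by (simp add: algebra_simps)
    have "real (2 * (n choose 2)) = real (n * (n - 1))" using two_choose2[of n] by simp
    hence C: "2 * real (n choose 2) = real n * (real n - 1)" using n2 by (simp add: of_nat_diff)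
    have e2': "2 * real (e_tilde G (n - 2)) = real k * (2 * real (n choose 2)) - 2 * real (Delta G)"
      using E by (simp add: algebra_simps)
    have nn: "n - 1 - 1 = n - 2" by simp
    have "a_coef G 1 = real (n - 1) * real (e_tilde G (n - 1)) - 2 * real (e_tilde G (n - 2))"
      unfolding a_coef_def dc nn by simp
    also have "\<dots> = (real n - 1) * (real n * real k) - 2 * real (e_tilde G (n - 2))"
      using e1 n2 by (simp add: of_nat_diff)
    also have "\<dots> = 2 * real (Delta G)" unfolding e2' C by (simp add: algebra_simps)
    finally show ?thesis .
  qed
  define a where "a = a_coef G"
  have D: "((\<lambda>p. \<Sum>t = 0..<n. a t * p ^ t * (1 - p) ^ (n - t - 1)) has_real_derivative
     (\<Sum>t = 0..<n. (if t = 0 then - real (n - 1) * a t else 0) + (if t = 1 then a t else 0))) (at 0)"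
    by (intro DERIV_sum term_deriv) (use n2 in auto)
  have "(\<Sum>t = 0..<n. (if t = 0 then - real (n - 1) * a t else 0) + (if t = 1 then a t else 0))
      = - real (n - 1) * a 0 + a 1" using n2 by (simp add: sum.distrib)
  also have "\<dots> = 2 * real (Delta G)" using a0 a1 unfolding a_def by simp
  finally have D2: "((\<lambda>p. \<Sum>t = 0..<n. a t * p ^ t * (1 - p) ^ (n - t - 1)) has_real_derivative
     2 * real (Delta G)) (at 0)" using D by simp
  have "exit_cnd G = (\<lambda>p. 1 - (1 / real n) * (\<Sum>t = 0..<n. a t * p ^ t * (1 - p) ^ (n - t - 1)))"
    unfolding exit_cnd_def a_def dc by auto
  moreover have "((\<lambda>p. 1 - (1 / real n) * (\<Sum>t = 0..<n. a t * p ^ t * (1 - p) ^ (n - t - 1)))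
     has_real_derivative (0 - (1 / real n) * (2 * real (Delta G)))) (at 0)"
    by (intro DERIV_diff DERIV_cmult D2 DERIV_const)
  ultimately show ?thesis by simp
qed

lemma Delta_zero:
  fixes G :: "bit mat"
  assumes G: "G \<in> carrier_mat k n" and gr: "gen_rank G = k" and n2: "n \<ge> 2"
    and d3: "dmin G \<ge> 3"
  shows "Delta G = 0"
proof -
  have dc: "dim_col G = n" "dim_row G = k" using G by auto
  show ?thesis unfolding Delta_def dc
  proof (intro sum.neutral ballI)
    fix S assume "S \<in> {S. S \<subseteq> {..<n} \<and> card S = n - 2}"
    hence S: "S \<subseteq> {..<n}" "card S = n - 2" by auto
    have "card S + dmin G > n" using S(2) d3 n2 by linarith
    hence "col_rank G S = k" by (rule col_rank_full[OF G gr S(1)])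
    then show "k - col_rank G S = 0" by simp
  qed
qed


theorem mainTheorem6:
  fixes rhoSPC :: "nat \<Rightarrow> real" and J :: nat
    and Idx :: "'i set" and rho :: "'i \<Rightarrow> real" and G :: "'i \<Rightarrow> bit mat"
    and n k :: "'i \<Rightarrow> nat"
  assumes "finite Idx"
    and "\<And>j. rhoSPC j \<ge> 0"
    and "\<And>j. j > J \<Longrightarrow> rhoSPC j = 0"
    and "\<And>i. i \<in> Idx \<Longrightarrow> rho i \<ge> 0"
    and "(\<Sum>j = 2..J. rhoSPC j) + (\<Sum>i\<in>Idx. rho i) = 1"
    and "\<And>i. i \<in> Idx \<Longrightarrow> G i \<in> carrier_mat (k i) (n i)"
    and "\<And>i. i \<in> Idx \<Longrightarrow> gen_rank (G i) = k i"
    and "\<And>i. i \<in> Idx \<Longrightarrow> n i \<ge> 2"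
    and "\<And>i. i \<in> Idx \<Longrightarrow> k i \<ge> 1"
    and "\<And>i. i \<in> Idx \<Longrightarrow> dmin (G i) \<ge> 2"
  shows "((\<lambda>p. (\<Sum>j = 2..J. rhoSPC j * (1 - p) ^ (j - 1))
              + (\<Sum>i\<in>Idx. rho i * exit_cnd (G i) p))
         has_real_derivative
           (- (\<Sum>j = 2..J. real (j - 1) * rhoSPC j)
            - (\<Sum>i\<in>{i\<in>Idx. dmin (G i) = 2}. 2 * rho i / real (n i) * real (Delta (G i)))))
         (at 0)"
proof -
  have d1: "((\<lambda>p. \<Sum>j = 2..J. rhoSPC j * (1 - p) ^ (j - 1)) has_real_derivative
      (\<Sum>j = 2..J. rhoSPC j * (real (j - 1) * (1 - 0) ^ (j - 1 - 1) * - 1))) (at 0)"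
    by (intro DERIV_sum) (auto intro!: derivative_eq_intros simp: algebra_simps)
  have d2: "((\<lambda>p. \<Sum>i\<in>Idx. rho i * exit_cnd (G i) p) has_real_derivative
      (\<Sum>i\<in>Idx. rho i * (- (2 * real (Delta (G i)) / real (n i))))) (at 0)"
    by (intro DERIV_sum DERIV_cmult exit_deriv[where k = "k _"]) (use assms in auto)
  have v1: "(\<Sum>j = 2..J. rhoSPC j * (real (j - 1) * (1 - 0) ^ (j - 1 - 1) * - 1))
      = - (\<Sum>j = 2..J. real (j - 1) * rhoSPC j)"
    by (simp add: sum_negf[symmetric] algebra_simps)
  have "(\<Sum>i\<in>Idx. rho i * (- (2 * real (Delta (G i)) / real (n i))))
      = - (\<Sum>i\<in>Idx. if dmin (G i) = 2 then 2 * rho i / real (n i) * real (Delta (G i)) else 0)"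
  proof -
    have "rho i * (- (2 * real (Delta (G i)) / real (n i))) =
      - (if dmin (G i) = 2 then 2 * rho i / real (n i) * real (Delta (G i)) else 0)" if i: "i \<in> Idx" for i
    proof (cases "dmin (G i) = 2")
      case False
      hence "dmin (G i) \<ge> 3" using assms(10)[OF i] by simp
      hence "Delta (G i) = 0" using Delta_zero[OF assms(6)[OF i] assms(7)[OF i] assms(8)[OF i]] by simp
      then show ?thesis using False by simp
    qed simp
    then show ?thesis by (simp add: sum_negf[symmetric])
  qed
  also have "\<dots> = - (\<Sum>i\<in>{i\<in>Idx. dmin (G i) = 2}. 2 * rho i / real (n i) * real (Delta (G i)))"
    by (rule arg_cong[where f=uminus], rule sum.inter_filter[symmetric, OF assms(1)])
  finally have v2: "(\<Sum>i\<in>Idx. rho i * (- (2 * real (Delta (G i)) / real (n i)))) =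
    - (\<Sum>i\<in>{i\<in>Idx. dmin (G i) = 2}. 2 * rho i / real (n i) * real (Delta (G i)))" .
  show ?thesis using DERIV_add[OF d1 d2] unfolding v1 v2 by simp
qed


end
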